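(* Let $n=2k$ and let $u_1,\ldots,u_k$ be pairwise distinct elements of $\mathbb{F}_{2^n}$ such that $u_iu_j^{2^k}\in\mathbb{F}_{2^k}^*$ for all $1\le i<j\le k$. Let $t$ be a positive integer, let $F_1,\ldots,F_t$ be reduced polynomials in $\mathbb{F}_2[X_1,\ldots,X_k]$, and set $f_i(x)=F_i(\mathrm{Tr}^n_1(u_1x),\ldots,\mathrm{Tr}^n_1(u_kx))$. Then $\widehat H(x)=(x^{2^k+1},f_1(x),\ldots,f_t(x))$ is a vectorial plateaued $(n,k+t)$-function if and only if the $(n,t)$-function $(f_1,\ldots,f_t)$ is vectorial plateaued.
   Context: $\mathrm{Tr}^n_1(x)=\sum_{i=0}^{n-1}x^{2^i}$; $x^{2^k+1}\in\mathbb{F}_{2^k}$. $\widehat H$ is viewed as a map $\mathbb{F}_{2^n}\to\mathbb{F}_{2^k}\times\mathbb{F}_2^t$ with components $\langle(u,v),\widehat H(x)\rangle=\mathrm{Tr}^k_1(ux^{2^k+1})+\sum_i v_if_i(x)$, $(u,v)\ne(0,0)$. A Boolean function $f$ is plateaued if $W_f(a)=\sum_x(-1)^{f(x)+\mathrm{Tr}^n_1(ax)}$ takes values in $\{0,\pm2^s\}$ for some $n/2\le s\le n$; a vectorial function is vectorial plateaued if all its components are plateaued. A reduced polynomial is a multilinear polynomial over $\mathbb{F}_2$. *)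

theory Defs
  imports Main "HOL-Library.Cardinality"
begin

text \<open>The field F_{2^n} is rendered as a finite field type 'a of characteristic 2
  with CARD('a) = 2^n. Elements of F_2 are rendered as bool (True = 1, xor = addition).\<close>

definition Tr :: "nat \<Rightarrow> 'a::field \<Rightarrow> 'a" where
  "Tr m x = (\<Sum>i<m. x ^ (2 ^ i))"

text \<open>Absolute trace Tr^m_1, viewed as an element of F_2 (True iff the trace is 1, i.e. nonzero).\<close>
definition trb :: "nat \<Rightarrow> 'a::field \<Rightarrow> bool" where
  "trb m x = (Tr m x \<noteq> 0)"

definition subfield :: "nat \<Rightarrow> 'a::field set" where
  "subfield m = {x. x ^ (2 ^ m) = x}"

text \<open>Reduced (multilinear) polynomial over F_2 in variables X_0..X_{k-1}:
  a finite set of monomials, each monomial given by the set of its variables.\<close>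
definition reduced_poly :: "nat \<Rightarrow> nat set set \<Rightarrow> bool" where
  "reduced_poly k P \<longleftrightarrow> finite P \<and> (\<forall>S\<in>P. S \<subseteq> {..<k})"

definition eval_rpoly :: "nat set set \<Rightarrow> (nat \<Rightarrow> bool) \<Rightarrow> bool" where
  "eval_rpoly P X = odd (card {S\<in>P. \<forall>j\<in>S. X j})"

definition walsh :: "nat \<Rightarrow> ('a::{field,finite} \<Rightarrow> bool) \<Rightarrow> 'a \<Rightarrow> int" where
  "walsh n f a = (\<Sum>x\<in>UNIV. if f x = trb n (a * x) then 1 else -1)"

definition plateaued :: "nat \<Rightarrow> ('a::{field,finite} \<Rightarrow> bool) \<Rightarrow> bool" where
  "plateaued n f \<longleftrightarrow> (\<exists>s::nat. n \<le> 2 * s \<and> s \<le> n \<and>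
      (\<forall>a. walsh n f a \<in> {0, 2 ^ s, - (2 ^ s)}))"

text \<open>XOR of the f_i(x) with v_i = 1, i < t: the F_2 inner product v . (f_1(x),...,f_t(x)).\<close>
definition vdot :: "nat \<Rightarrow> (nat \<Rightarrow> bool) \<Rightarrow> (nat \<Rightarrow> 'a \<Rightarrow> bool) \<Rightarrow> 'a \<Rightarrow> bool" where
  "vdot t v fs x = odd (card {i. i < t \<and> v i \<and> fs i x})"

definition vplateaued :: "nat \<Rightarrow> nat \<Rightarrow> (nat \<Rightarrow> 'a::{field,finite} \<Rightarrow> bool) \<Rightarrow> bool" where
  "vplateaued n t fs \<longleftrightarrow>
     (\<forall>v. (\<exists>i<t. v i) \<longrightarrow> plateaued n (vdot t v fs))"

text \<open>Components of H(x) = (x^{2^k+1}, f_1(x), ..., f_t(x)) as a map into F_{2^k} x F_2^t: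
  <(u,v), H(x)> = Tr^k_1(u x^{2^k+1}) + sum_i v_i f_i(x).\<close>
definition H_component :: "nat \<Rightarrow> nat \<Rightarrow> (nat \<Rightarrow> 'a::field \<Rightarrow> bool) \<Rightarrow> 'a \<Rightarrow> (nat \<Rightarrow> bool) \<Rightarrow> 'a \<Rightarrow> bool" where
  "H_component k t fs u v x = (trb k (u * x ^ (2 ^ k + 1)) \<noteq> vdot t v fs x)"

definition H_vplateaued :: "nat \<Rightarrow> nat \<Rightarrow> nat \<Rightarrow> (nat \<Rightarrow> 'a::{field,finite} \<Rightarrow> bool) \<Rightarrow> bool" where
  "H_vplateaued n k t fs \<longleftrightarrow>
     (\<forall>u v. u \<in> subfield k \<longrightarrow> (u \<noteq> 0 \<or> (\<exists>i<t. v i)) \<longrightarrow>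
        plateaued n (H_component k t fs u v))"

end

theory Submission
  imports Defs "HOL-Computational_Algebra.Polynomial"
begin

lemma c2_add_self:
  assumes c2: "(1::'a::field) + 1 = 0" shows "x + x = (0::'a)"
proof -
  have "x + x = x * (1 + 1)" by (simp add: distrib_left)
  then show ?thesis using c2 by simp
qed

lemma c2_two: assumes c2: "(1::'a::field) + 1 = 0" shows "(2::'a) = 0"
  using c2 by (metis one_add_one)

lemma c2_minus: assumes c2: "(1::'a::field) + 1 = 0" shows "x - y = x + (y::'a)"
proof -
  have "y + y = 0" using c2_add_self[OF c2] .
  then have "- y = y" by (metis minus_unique)
  then show ?thesis by (metis diff_conv_add_uminus)
qed

lemma c2_sq_add:
  assumes c2: "(1::'a::field) + 1 = 0" shows "(x + y) ^ 2 = x ^ 2 + (y::'a) ^ 2"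
  using c2_two[OF c2] by (simp add: power2_sum)

lemma c2_pow_add:
  assumes c2: "(1::'a::field) + 1 = 0" shows "(x + y) ^ (2 ^ i) = x ^ (2 ^ i) + (y::'a) ^ (2 ^ i)"
proof (induction i)
  case 0 then show ?case by simp
next
  case (Suc i)
  have "(x + y) ^ (2 ^ Suc i) = ((x + y) ^ (2 ^ i)) ^ 2"
    by (simp add: power_mult[symmetric] mult.commute)
  also have "\<dots> = (x ^ (2 ^ i)) ^ 2 + (y ^ (2 ^ i)) ^ 2" using Suc c2_sq_add[OF c2] by simp
  also have "\<dots> = x ^ (2 ^ Suc i) + y ^ (2 ^ Suc i)"
    by (simp add: power_mult[symmetric] mult.commute)
  finally show ?case .
qed

lemma c2_pow_sum:
  assumes c2: "(1::'a::field) + 1 = 0" and "finite A"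
  shows "(\<Sum>j\<in>A. g j) ^ (2 ^ i) = (\<Sum>j\<in>A. (g j :: 'a) ^ (2 ^ i))"
  using assms(2) by (induction A rule: finite_induct) (simp_all add: c2_pow_add[OF c2])

lemma pow_pow2: "((x::'a::comm_monoid_mult) ^ (2 ^ i)) ^ (2 ^ j) = x ^ (2 ^ (i + j))"
  by (simp add: power_mult[symmetric] power_add)

lemma fermat_card:
  fixes x :: "'a::{field,finite}"
  shows "x ^ CARD('a) = x"
proof (cases "x = 0")
  case True
  have "CARD('a) > 0" by simp
  then show ?thesis using True by simp
next
  case False
  define A where "A = (UNIV::'a set) - {0}"
  have fA: "finite A" by simp
  have bij: "bij_betw (\<lambda>y. x * y) A A"
    unfolding bij_betw_def inj_on_def A_def using False
    apply (auto simp: image_def)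
    subgoal for z by (rule bexI[of _ "z / x"]) auto
    done
  have "(\<Prod>y\<in>A. x * y) = (\<Prod>y\<in>A. y)"
    using prod.reindex_bij_betw[OF bij, of "\<lambda>y. y"] by simp
  moreover have "(\<Prod>y\<in>A. x * y) = x ^ card A * (\<Prod>y\<in>A. y)"
    by (simp add: prod.distrib)
  moreover have "(\<Prod>y\<in>A. y) \<noteq> 0" using fA by (simp add: A_def)
  ultimately have "x ^ card A = 1" by simp
  moreover have "card A = CARD('a) - 1" unfolding A_def by (simp add: card_Diff_singleton)
  moreover have "CARD('a) = Suc (CARD('a) - 1)" by simp
  ultimately show ?thesis by (metis mult_1_right power_Suc)
qed

lemma Tr_add:
  assumes c2: "(1::'a::field) + 1 = 0"
  shows "Tr m (x + y) = Tr m x + Tr m (y::'a)"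
  unfolding Tr_def by (simp add: c2_pow_add[OF c2] sum.distrib)

lemma Tr_zero: "Tr m (0::'a::field) = 0"
  unfolding Tr_def by (simp add: zero_power)

lemma sum_split_nat: "(\<Sum>i<a + b. g i) = (\<Sum>i<a. g i) + (\<Sum>i<b. g (a + i))"
  for g :: "nat \<Rightarrow> 'b::comm_monoid_add"
  by (induction b) (simp_all add: add.assoc)


lemma roots_bound:
  fixes p :: "'a::field poly"
  assumes "p \<noteq> 0" "\<And>x. poly p x = g x"
  shows "card {x. g x = 0} \<le> degree p"
  using card_poly_roots_bound[OF assms(1)] assms(2) by simp

locale ff =
  fixes n k :: nat and ty :: "'a::{field,finite} itself"
  assumes c2: "(1::'a::{field,finite}) + 1 = 0" and card: "CARD('a) = 2 ^ n" and nk: "n = 2 * k"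
begin

definition T :: "'a \<Rightarrow> 'a" where "T x = x + x ^ (2 ^ k)"

lemma card_ge2: "CARD('a) \<ge> 2"
proof -
  have "card {0::'a, 1} \<le> CARD('a)" by (rule card_mono) auto
  then show ?thesis by simp
qed

lemma k_pos: "k > 0"
  using card_ge2 card nk by (cases k) auto

lemma frob_n: "(x::'a) ^ (2 ^ n) = x"
  using fermat_card[of x] card by simp

lemma frob_qq: "((x::'a) ^ (2 ^ k)) ^ (2 ^ k) = x"
  using frob_n[of x] nk by (simp add: pow_pow2 mult_2)

lemma addself: "(x::'a) + x = 0" using c2_add_self[OF c2] .
lemma minus_c2: "(x::'a) - y = x + y" using c2_minus[OF c2] .
lemma uminus_c2: "- (x::'a) = x" using minus_c2[of 0 x] by simp

lemma powadd: "((x::'a) + y) ^ (2 ^ i) = x ^ (2 ^ i) + y ^ (2 ^ i)"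
  using c2_pow_add[OF c2] .

abbreviation K :: "'a set" where "K \<equiv> subfield k"

lemma K_iff: "x \<in> K \<longleftrightarrow> x ^ (2 ^ k) = x" by (simp add: subfield_def)

lemma K_0: "0 \<in> K" by (simp add: K_iff)
lemma K_1: "1 \<in> K" by (simp add: K_iff)
lemma K_add: "x \<in> K \<Longrightarrow> y \<in> K \<Longrightarrow> x + y \<in> K" by (simp add: K_iff powadd)
lemma K_mult: "x \<in> K \<Longrightarrow> y \<in> K \<Longrightarrow> x * y \<in> K" by (simp add: K_iff power_mult_distrib)
lemma K_div: "x \<in> K \<Longrightarrow> y \<in> K \<Longrightarrow> x / y \<in> K" by (simp add: K_iff power_divide)
lemma K_pow: assumes "x \<in> K" shows "x ^ m \<in> K"
proof -
  have "(x ^ m) ^ (2 ^ k) = (x ^ (2 ^ k)) ^ m" by (simp only: power_mult[symmetric] mult.commute)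
  then show ?thesis using assms by (simp add: K_iff)
qed
lemma T_K: "T x \<in> K" by (simp add: K_iff T_def powadd frob_qq add.commute)
lemma N_K: "x ^ (2 ^ k + 1) \<in> K"
proof -
  have "(x ^ (2 ^ k + 1)) ^ (2 ^ k) = (x ^ 2 ^ k * x) ^ 2 ^ k" by (simp only: power_add power_one_right)
  also have "\<dots> = (x ^ 2 ^ k) ^ 2 ^ k * x ^ 2 ^ k" by (simp only: power_mult_distrib)
  also have "\<dots> = x ^ (2 ^ k + 1)" by (simp add: frob_qq mult.commute)
  finally show ?thesis by (simp add: K_iff)
qed

lemma T_add: "T (x + y) = T x + T y" by (simp add: T_def powadd algebra_simps)
lemma T_scale: "c \<in> K \<Longrightarrow> T (c * x) = c * T x"
  by (simp add: T_def K_iff power_mult_distrib distrib_left)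
lemma T_of_K: "z \<in> K \<Longrightarrow> T z = 0" by (simp add: T_def K_iff addself)

lemma Tr_sq: "Tr k ((y::'a) ^ 2) = (Tr k y) ^ 2"
  unfolding Tr_def using c2_pow_sum[OF c2, where A="{..<k}" and g="\<lambda>i. y ^ 2 ^ i" and i=1]
  by (simp add: power_mult[symmetric] mult.commute)

lemma Tr_K_sq: assumes "y \<in> K" shows "Tr k (y ^ 2) = Tr k y"
proof -
  have "Tr k (y ^ 2) = (\<Sum>i<k. y ^ 2 ^ Suc i)" unfolding Tr_def
    by (simp add: power_mult[symmetric] mult.commute)
  also have "(\<Sum>i<k. y ^ 2 ^ Suc i) + y = (\<Sum>i<Suc k. y ^ 2 ^ i)"
    by (subst sum.lessThan_Suc_shift) (simp only: power_0 power_one_right add.commute)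
  also have "\<dots> = Tr k y + y" using assms by (simp add: Tr_def K_iff)
  finally show ?thesis by simp
qed

lemma Tr_K01: assumes "y \<in> K" shows "Tr k y = 0 \<or> Tr k y = 1"
proof -
  have "(Tr k y) ^ 2 = Tr k y" using Tr_K_sq[OF assms] Tr_sq by simp
  then have "Tr k y * (Tr k y - 1) = 0" by (simp add: power2_eq_square algebra_simps)
  then show ?thesis by simp
qed

lemma Tr_addk: "Tr k (x + y) = Tr k x + Tr k (y::'a)" using Tr_add[OF c2] .

lemma trb_add: assumes "x \<in> K" "y \<in> K" shows "trb k (x + y) = (trb k x \<noteq> trb k y)"
  using Tr_K01[OF assms(1)] Tr_K01[OF assms(2)] c2
  by (auto simp: trb_def Tr_addk)

lemma Tr_n_T: "Tr n x = Tr k (T x)"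
proof -
  have "Tr n x = (\<Sum>i<k + k. x ^ 2 ^ i)" by (simp add: Tr_def nk mult_2)
  also have "\<dots> = (\<Sum>i<k. x ^ 2 ^ i) + (\<Sum>i<k. x ^ 2 ^ (k + i))" by (rule sum_split_nat)
  also have "\<dots> = Tr k x + Tr k (x ^ 2 ^ k)" by (simp add: Tr_def pow_pow2)
  also have "\<dots> = Tr k (T x)" by (simp add: T_def Tr_addk)
  finally show ?thesis .
qed

lemma trb_n_T: "trb n x = trb k (T x)" by (simp add: trb_def Tr_n_T)

end

context ff begin
lemma T_zero_iff: "T x = 0 \<longleftrightarrow> x \<in> K"
proof
  assume "T x = 0"
  then have "x ^ 2 ^ k = - x" unfolding T_def by (simp add: add_eq_0_iff add.commute)
  then show "x \<in> K" by (simp add: K_iff uminus_c2)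
qed (simp add: T_of_K)

lemma exists_zeta: "\<exists>\<zeta>. T \<zeta> = 1"
proof -
  define p :: "'a poly" where "p = monom 1 (2 ^ k) + monom 1 1"
  have "(1::nat) < 2 ^ k" using one_less_power[of "2::nat" k] k_pos by simp
  then have k2: "2 ^ k \<noteq> (1::nat)" by linarith
  have k3: "((1::nat) = 2 ^ k) = False" using k2 by (simp only: eq_commute[of 1] not_False_eq_True eq_False)
  have "coeff p (2 ^ k) = 1" unfolding p_def coeff_add coeff_monom
    by (simp only: k3 if_False if_True add_0_right refl)
  then have p0: "p \<noteq> 0" by auto
  have d1: "degree (monom (1::'a) 1) \<le> 1" by (rule degree_monom_le)
  have d2: "degree (monom (1::'a) (2 ^ k)) \<le> 2 ^ k" by (rule degree_monom_le)
  have "(1::nat) \<le> 2 ^ k" by simp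
  then have dp: "degree p \<le> 2 ^ k" unfolding p_def
    using d1 d2 by (intro degree_add_le) linarith+
  have "\<And>x. poly p x = T x" by (simp add: p_def poly_monom T_def add.commute)
  from roots_bound[OF p0 this] dp have c: "card {x. T x = 0} \<le> 2 ^ k" by simp
  have "(2::nat) ^ k < 2 ^ n" using k_pos nk by simp
  with c card have "{x. T x = 0} \<noteq> UNIV" by auto
  then obtain z where z: "T z \<noteq> 0" by auto
  define \<zeta> where "\<zeta> = (1 / T z) * z"
  have "1 / T z \<in> K" using K_div[OF K_1 T_K] .
  then have "T \<zeta> = 1 / T z * T z" unfolding \<zeta>_def by (rule T_scale)
  then show ?thesis using z by auto
qed

lemma decomp_bij:
  assumes zeta: "T zeta = 1"
  shows "bij_betw (\<lambda>(s, z). s * zeta + z) (K \<times> K) UNIV"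
proof (rule bij_betw_byWitness[where f'="\<lambda>y. (T y, y + T y * zeta)"])
  show "\<forall>a\<in>K \<times> K. (\<lambda>y. (T y, y + T y * zeta)) ((\<lambda>(s, z). s * zeta + z) a) = a"
  proof
    fix a assume "a \<in> K \<times> K"
    then obtain s z where a: "a = (s, z)" "s \<in> K" "z \<in> K" by auto
    have "T (s * zeta + z) = s" using a by (simp add: T_add T_scale zeta T_of_K)
    then show "(\<lambda>y. (T y, y + T y * zeta)) ((\<lambda>(s, z). s * zeta + z) a) = a"
      using a c2_two[OF c2] by (simp add: add.assoc add.commute addself)
  qed
  show "\<forall>a'\<in>UNIV. (\<lambda>(s, z). s * zeta + z) ((\<lambda>y. (T y, y + T y * zeta)) a') = a'"
    by (simp add: add.commute add.left_commute addself)
  show "(\<lambda>(s, z). s * zeta + z) ` (K \<times> K) \<subseteq> UNIV" by simp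
  show "(\<lambda>y. (T y, y + T y * zeta)) ` UNIV \<subseteq> K \<times> K"
  proof (clarsimp simp: T_K)
    fix y :: 'a
    have "T (T y * zeta) = T y * T zeta" by (rule T_scale[OF T_K])
    then have "T (y + T y * zeta) = T y + T y" by (simp add: T_add zeta)
    then have "T (y + T y * zeta) = 0" by (simp add: addself)
    then show "y + T y * zeta \<in> K" by (simp add: T_zero_iff)
  qed
qed

lemma card_K: "card K = 2 ^ k"
proof -
  obtain zeta where z: "T zeta = 1" using exists_zeta by blast
  have "card (K \<times> K) = CARD('a)" using bij_betw_same_card[OF decomp_bij[OF z]] by simp
  then have "card K * card K = 2 ^ k * 2 ^ k" by (simp add: card_cartesian_product card nk power_add[symmetric] mult_2)
  then have "card K ^ 2 = (2 ^ k) ^ 2" by (simp add: power2_eq_square)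
  then show ?thesis by (rule power_eq_imp_eq_base) auto
qed

end

definition chi :: "bool \<Rightarrow> int" where "chi b = (if b then -1 else 1)"

lemma chi_xor: "chi (a \<noteq> b) = chi a * chi b" by (simp add: chi_def)

context ff begin

lemma Tr_nontriv: "\<exists>y\<in>K. trb k y"
proof (rule ccontr)
  assume H: "\<not> (\<exists>y\<in>K. trb k y)"
  define p :: "'a poly" where "p = (\<Sum>i<k. monom 1 (2 ^ i))"
  have pp: "\<And>x. poly p x = Tr k x" by (simp add: p_def poly_sum poly_monom Tr_def)
  have "coeff p (2 ^ (k - 1)) = (\<Sum>i<k. if i = k - 1 then 1 else 0)"
    unfolding p_def coeff_sum coeff_monom by (intro sum.cong) auto
  also have "\<dots> = 1" using k_pos by simp
  finally have p0: "p \<noteq> 0" by auto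
  have dp: "degree p \<le> 2 ^ (k - 1)" unfolding p_def
  proof (rule degree_sum_le)
    fix i assume "i \<in> {..<k}"
    then have "(2::nat) ^ i \<le> 2 ^ (k - 1)" by (intro power_increasing) auto
    then show "degree (monom (1::'a) (2 ^ i)) \<le> 2 ^ (k - 1)"
      using degree_monom_le[of "1::'a" "2 ^ i"] by linarith
  qed simp
  have c: "card {x::'a. Tr k x = 0} \<le> 2 ^ (k - 1)" using roots_bound[OF p0 pp] dp by linarith
  have "(K::'a set) \<subseteq> {x. Tr k x = 0}" using H by (auto simp: trb_def)
  then have "card (K::'a set) \<le> card {x::'a. Tr k x = 0}" by (intro card_mono) auto
  with c card_K have "(2::nat) ^ k \<le> 2 ^ (k - 1)" by linarith
  then show False using k_pos by simp
qed

lemma trb_zero: "trb k 0 = False" by (simp add: trb_def Tr_zero)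

lemma char_sum:
  assumes c: "c \<in> K"
  shows "(\<Sum>z\<in>K. chi (trb k (z * c))) = (if c = 0 then 2 ^ k else 0)"
proof (cases "c = 0")
  case True
  then show ?thesis by (simp add: trb_zero chi_def card_K)
next
  case False
  obtain y0 where y0: "y0 \<in> K" "trb k y0" using Tr_nontriv by blast
  define z0 where "z0 = y0 / c"
  have z0K: "z0 \<in> K" unfolding z0_def using y0(1) c by (rule K_div)
  have bij: "bij_betw (\<lambda>z. z + z0) K K"
    by (rule bij_betw_byWitness[where f'="\<lambda>z. z + z0"])
       (auto simp: add.assoc addself K_add z0K)
  have "(\<Sum>z\<in>K. chi (trb k (z * c))) = (\<Sum>z\<in>K. chi (trb k ((z + z0) * c)))"
    using sum.reindex_bij_betw[OF bij, of "\<lambda>z. chi (trb k (z * c))"] by simp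
  also have "\<dots> = (\<Sum>z\<in>K. - chi (trb k (z * c)))"
  proof (rule sum.cong)
    fix z assume z: "z \<in> K"
    have "(z + z0) * c = z * c + y0" using False by (simp add: z0_def distrib_right)
    moreover have "trb k (z * c + y0) = (trb k (z * c) \<noteq> trb k y0)"
      by (rule trb_add) (use z c y0 K_mult in auto)
    ultimately show "chi (trb k ((z + z0) * c)) = - chi (trb k (z * c))"
      using y0 by (simp add: chi_def)
  qed simp
  also have "\<dots> = - (\<Sum>z\<in>K. chi (trb k (z * c)))" by (simp add: sum_negf)
  finally show ?thesis using False by simp
qed

end

context ff begin

lemma core:
  fixes u a :: 'a and \<Phi> :: "'a \<Rightarrow> bool"
  assumes uK: "u \<in> K" and u0: "u \<noteq> 0"
  shows "walsh n (\<lambda>y. trb k (u * y ^ (2 ^ k + 1)) \<noteq> \<Phi> (T y)) a \<in> {2 ^ k, - (2 ^ k)}"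
proof -
  obtain \<zeta> :: 'a where z: "T \<zeta> = 1" using exists_zeta by blast
  define q :: nat where "q = 2 ^ k"
  define r where "r = u ^ (2 ^ (k - 1))"
  have rK: "r \<in> K" unfolding r_def using uK by (rule K_pow)
  have r2: "r ^ 2 = u"
  proof -
    have "r ^ 2 = u ^ (2 ^ (k - 1) * 2)" unfolding r_def by (simp only: power_mult)
    also have "2 ^ (k - 1) * 2 = (2::nat) ^ k" using k_pos by (cases k) auto
    finally show ?thesis using uK by (simp add: K_iff)
  qed
  define N where "N = \<zeta> ^ (2 ^ k + 1)"
  have NK: "N \<in> K" unfolding N_def by (rule N_K)
  have zz: "\<zeta> + \<zeta> ^ 2 ^ k = 1" using z by (simp add: T_def)
  define G where "G y = (trb k (u * y ^ (2 ^ k + 1)) \<noteq> \<Phi> (T y))" for y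
  define B where "B s = ((trb k (u * s ^ 2 * N) \<noteq> \<Phi> s) \<noteq> trb k (s * T (a * \<zeta>)))" for s
  define c where "c s = u * s + r + T a" for s
  have TaK: "T a \<in> K" "T (a * \<zeta>) \<in> K" by (rule T_K)+
  have key: "(G (s * \<zeta> + z) \<noteq> trb n (a * (s * \<zeta> + z))) = (B s \<noteq> trb k (z * c s))"
    if sK: "s \<in> K" and zK: "z \<in> K" for s z
  proof -
    let ?y = "s * \<zeta> + z"
    have Ty: "T ?y = s" using sK zK by (simp add: T_add T_scale z T_of_K)
    have yq: "?y ^ 2 ^ k = s * \<zeta> ^ 2 ^ k + z"
      using sK zK by (simp add: powadd power_mult_distrib K_iff)
    have "?y ^ (2 ^ k + 1) = ?y ^ 2 ^ k * ?y" by simp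
    also have "\<dots> = s * s * (\<zeta> * \<zeta> ^ 2 ^ k) + s * z * (\<zeta> + \<zeta> ^ 2 ^ k) + z * z"
      unfolding yq by (simp add: algebra_simps addself)
    finally have yN: "?y ^ (2 ^ k + 1) = s * s * N + s * z + z * z"
      using zz by (simp add: N_def mult.commute)
    have e1: "u * ?y ^ (2 ^ k + 1) = (u * s ^ 2 * N + u * s * z) + (r * z) ^ 2"
      unfolding yN using r2 by (simp add: algebra_simps power2_eq_square)
    have K1: "u * s ^ 2 * N \<in> K" using uK sK NK by (intro K_mult K_pow)
    have K2: "u * s * z \<in> K" using uK sK zK by (intro K_mult)
    have K3: "r * z \<in> K" using rK zK by (intro K_mult)
    have K3': "(r * z) ^ 2 \<in> K" using K3 by (rule K_pow)
    have K4: "z * T a \<in> K" using zK TaK by (intro K_mult)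
    have K5: "s * T (a * \<zeta>) \<in> K" using sK TaK by (intro K_mult)
    have t1: "trb k (u * ?y ^ (2 ^ k + 1)) =
        ((trb k (u * s ^ 2 * N) \<noteq> trb k (u * s * z)) \<noteq> trb k (r * z))"
    proof -
      have "trb k (u * ?y ^ (2 ^ k + 1)) = (trb k (u * s ^ 2 * N + u * s * z) \<noteq> trb k ((r * z) ^ 2))"
        unfolding e1 by (rule trb_add[OF K_add[OF K1 K2] K3'])
      moreover have "trb k (u * s ^ 2 * N + u * s * z) = (trb k (u * s ^ 2 * N) \<noteq> trb k (u * s * z))"
        by (rule trb_add[OF K1 K2])
      moreover have "trb k ((r * z) ^ 2) = trb k (r * z)" by (simp add: trb_def Tr_K_sq[OF K3])
      ultimately show ?thesis by simp
    qed
    have "T (a * ?y) = T (s * (a * \<zeta>)) + T (z * a)"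
      by (simp add: algebra_simps T_add)
    also have "\<dots> = s * T (a * \<zeta>) + z * T a" using sK zK by (simp add: T_scale)
    finally have t2: "trb n (a * ?y) = (trb k (s * T (a * \<zeta>)) \<noteq> trb k (z * T a))"
      using K4 K5 by (simp add: trb_n_T trb_add)
    have "z * c s = (u * s * z + r * z) + z * T a" by (simp add: c_def algebra_simps)
    then have t3: "trb k (z * c s) = ((trb k (u * s * z) \<noteq> trb k (r * z)) \<noteq> trb k (z * T a))"
      using K2 K3 K4 K_add by (simp add: trb_add)
    show ?thesis unfolding G_def B_def t1 t2 t3 Ty by auto
  qed
  define s0 where "s0 = (r + T a) / u"
  have s0K: "s0 \<in> K" unfolding s0_def using K_add[OF rK TaK(1)] uK by (rule K_div)
  have cs: "c s = 0 \<longleftrightarrow> s = s0" for s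
  proof -
    have "c s = 0 \<longleftrightarrow> u * s = r + T a"
      unfolding c_def using addself minus_c2
      by (metis add.assoc add_diff_cancel_right' diff_zero)
    also have "\<dots> \<longleftrightarrow> s = s0" using u0 by (auto simp: s0_def field_simps)
    finally show ?thesis .
  qed
  have cK: "c s \<in> K" if "s \<in> K" for s
    unfolding c_def using uK that rK TaK by (intro K_add K_mult)
  have "walsh n G a = (\<Sum>y\<in>UNIV. chi (G y \<noteq> trb n (a * y)))"
    unfolding walsh_def chi_def by (intro sum.cong refl) auto
  also have "\<dots> = (\<Sum>p\<in>K \<times> K. chi (G ((\<lambda>(s, z). s * \<zeta> + z) p) \<noteq> trb n (a * (\<lambda>(s, z). s * \<zeta> + z) p)))"
    using sum.reindex_bij_betw[OF decomp_bij[OF z], of "\<lambda>y. chi (G y \<noteq> trb n (a * y))"] by simp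
  also have "\<dots> = (\<Sum>s\<in>K. \<Sum>z\<in>K. chi (G (s * \<zeta> + z) \<noteq> trb n (a * (s * \<zeta> + z))))"
    by (simp add: sum.cartesian_product case_prod_beta)
  also have "\<dots> = (\<Sum>s\<in>K. \<Sum>z\<in>K. chi (B s) * chi (trb k (z * c s)))"
    by (intro sum.cong refl) (simp only: key chi_xor)
  also have "\<dots> = (\<Sum>s\<in>K. chi (B s) * (\<Sum>z\<in>K. chi (trb k (z * c s))))"
    by (simp add: sum_distrib_left)
  also have "\<dots> = (\<Sum>s\<in>K. if s = s0 then chi (B s) * 2 ^ k else 0)"
    by (intro sum.cong refl) (simp add: char_sum cK cs)
  also have "\<dots> = chi (B s0) * 2 ^ k" using s0K by simp
  finally show ?thesis unfolding G_def by (auto simp: chi_def)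
qed

end

context ff begin

lemma subst_core:
  fixes u w a :: 'a and \<Phi> :: "'a \<Rightarrow> bool"
  assumes uK: "u \<in> K" and u0: "u \<noteq> 0" and w0: "w \<noteq> 0"
  shows "walsh n (\<lambda>x. trb k (u * x ^ (2 ^ k + 1)) \<noteq> \<Phi> (T (w * x))) a \<in> {2 ^ k, - (2 ^ k)}"
proof -
  define u' where "u' = u / w ^ (2 ^ k + 1)"
  have u'K: "u' \<in> K" unfolding u'_def using uK N_K by (rule K_div)
  have u'0: "u' \<noteq> 0" using u0 w0 by (simp add: u'_def)
  define G1 where "G1 y = (trb k (u' * y ^ (2 ^ k + 1)) \<noteq> \<Phi> (T y))" for y
  have eq: "(trb k (u * x ^ (2 ^ k + 1)) \<noteq> \<Phi> (T (w * x))) = G1 (w * x)" for x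
  proof -
    have "u' * (w * x) ^ (2 ^ k + 1) = u * x ^ (2 ^ k + 1)"
      using w0 by (simp add: u'_def power_mult_distrib)
    then show ?thesis unfolding G1_def by (simp only:)
  qed
  have bij: "bij_betw (\<lambda>x. w * x) UNIV UNIV"
    by (rule bij_betw_byWitness[where f'="\<lambda>y. y / w"]) (use w0 in auto)
  have "walsh n (\<lambda>x. trb k (u * x ^ (2 ^ k + 1)) \<noteq> \<Phi> (T (w * x))) a
      = (\<Sum>x\<in>UNIV. if G1 (w * x) = trb n (a / w * (w * x)) then 1 else -1)"
    unfolding walsh_def eq using w0 by simp
  also have "\<dots> = walsh n G1 (a / w)"
    unfolding walsh_def
    using sum.reindex_bij_betw[OF bij, of "\<lambda>y. if G1 y = trb n (a / w * y) then 1 else (-1::int)"]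
    by simp
  finally show ?thesis using core[OF u'K u'0, of \<Phi> "a / w"] unfolding G1_def by simp
qed

lemma dep:
  fixes uu :: "nat \<Rightarrow> 'a" and w :: 'a
  assumes cw: "\<forall>j<k. \<exists>c\<in>K. uu j = c * w"
    and red: "\<forall>i<t. reduced_poly k (F i)"
    and fdef: "\<forall>i x. f i x = eval_rpoly (F i) (\<lambda>j. trb n (uu j * x))"
    and Txy: "T (w * x) = T (w * y)"
  shows "vdot t v f x = vdot t v f y"
proof -
  have tj: "trb n (uu j * x) = trb n (uu j * y)" if "j < k" for j
  proof -
    have "\<exists>c\<in>K. uu j = c * w" using cw that by simp
    then obtain c where c: "c \<in> K" "uu j = c * w" by blast
    have "T (uu j * x) = c * T (w * x)" "T (uu j * y) = c * T (w * y)"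
      using c by (simp_all add: T_scale[symmetric] mult.assoc)
    then show ?thesis using Txy by (simp add: trb_n_T)
  qed
  have fi: "f i x = f i y" if "i < t" for i
  proof -
    have "{S \<in> F i. \<forall>j\<in>S. trb n (uu j * x)} = {S \<in> F i. \<forall>j\<in>S. trb n (uu j * y)}"
      using red that tj unfolding reduced_poly_def by blast
    then show ?thesis using fdef by (simp add: eval_rpoly_def)
  qed
  have "{i. i < t \<and> v i \<and> f i x} = {i. i < t \<and> v i \<and> f i y}" using fi by blast
  then show ?thesis by (simp add: vdot_def)
qed

lemma w_exists:
  fixes uu :: "nat \<Rightarrow> 'a"
  assumes prod: "\<forall>i j. i < j \<and> j < k \<longrightarrow>
                  uu i * uu j ^ (2 ^ k) \<in> subfield k \<and> uu i * uu j ^ (2 ^ k) \<noteq> 0"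
  shows "\<exists>w. w \<noteq> 0 \<and> (\<forall>j<k. \<exists>c\<in>K. uu j = c * w)"
proof (cases "uu 0 = 0")
  case True
  have "k = 1"
  proof (rule ccontr)
    assume "k \<noteq> 1"
    then have "0 < (1::nat) \<and> 1 < k" using k_pos by auto
    then show False using prod True by auto
  qed
  then show ?thesis using True K_0 by (intro exI[of _ 1]) auto
next
  case False
  have "\<forall>j<k. \<exists>c\<in>K. uu j = c * uu 0"
  proof (intro allI impI)
    fix j assume j: "j < k"
    show "\<exists>c\<in>K. uu j = c * uu 0"
    proof (cases "j = 0")
      case True then show ?thesis using K_1 by auto
    next
      case False
      define m where "m = uu 0 * uu j ^ 2 ^ k"
      have mK: "m \<in> K" using prod j False unfolding m_def by auto
      have "m ^ 2 ^ k = uu 0 ^ 2 ^ k * uu j" unfolding m_def by (simp add: power_mult_distrib frob_qq)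
      then have "m = uu 0 ^ 2 ^ k * uu j" using mK by (simp add: K_iff)
      moreover have "uu 0 ^ 2 ^ k \<noteq> 0" using \<open>uu 0 \<noteq> 0\<close> by simp
      ultimately have "uu j = m / uu 0 ^ 2 ^ k" by (simp add: field_simps)
      then have "uu j = (m / uu 0 ^ (2 ^ k + 1)) * uu 0" using \<open>uu 0 \<noteq> 0\<close> by (simp add: field_simps)
      moreover have "m / uu 0 ^ (2 ^ k + 1) \<in> K" using mK N_K by (rule K_div)
      ultimately show ?thesis by blast
    qed
  qed
  then show ?thesis using False by blast
qed

end

theorem corollary5:
  fixes n k t :: nat and u :: "nat \<Rightarrow> 'a::{field,finite}" and F :: "nat \<Rightarrow> nat set set"
    and f :: "nat \<Rightarrow> 'a \<Rightarrow> bool"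
  assumes char2: "(1::'a) + 1 = 0"
    and card: "CARD('a) = 2 ^ n"
    and nk: "n = 2 * k"
    and distinct: "inj_on u {..<k}"
    and prod: "\<forall>i j. i < j \<and> j < k \<longrightarrow>
                  u i * u j ^ (2 ^ k) \<in> subfield k \<and> u i * u j ^ (2 ^ k) \<noteq> 0"
    and tpos: "0 < t"
    and red: "\<forall>i<t. reduced_poly k (F i)"
    and fdef: "\<forall>i x. f i x = eval_rpoly (F i) (\<lambda>j. trb n (u j * x))"
  shows "H_vplateaued n k t f \<longleftrightarrow> vplateaued n t f"
proof -
  interpret ff n k "TYPE('a)" by unfold_locales (rule char2 card nk)+
  have H0: "H_component k t f 0 v = vdot t v f" for v
    by (rule ext) (simp add: H_component_def trb_zero)
  show ?thesis
  proof
    assume H: "H_vplateaued n k t f"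
    show "vplateaued n t f" unfolding vplateaued_def
    proof (intro allI impI)
      fix v assume "\<exists>i<t. v i"
      then have "plateaued n (H_component k t f 0 v)"
        using H K_0 unfolding H_vplateaued_def by blast
      then show "plateaued n (vdot t v f)" by (simp add: H0)
    qed
  next
    assume V: "vplateaued n t f"
    obtain w where w: "w \<noteq> 0" "\<forall>j<k. \<exists>c\<in>K. u j = c * w"
      using w_exists[OF prod] by blast
    show "H_vplateaued n k t f" unfolding H_vplateaued_def
    proof (intro allI impI)
      fix uu :: 'a and v assume uuK: "uu \<in> subfield k" and nz: "uu \<noteq> 0 \<or> (\<exists>i<t. v i)"
      show "plateaued n (H_component k t f uu v)"
      proof (cases "uu = 0")
        case True
        then show ?thesis using nz V by (simp add: H0 vplateaued_def)
      next
        case False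
        define \<Phi> where "\<Phi> s = vdot t v f (SOME y. T (w * y) = s)" for s
        have Phi: "vdot t v f x = \<Phi> (T (w * x))" for x
        proof -
          have "T (w * (SOME y. T (w * y) = T (w * x))) = T (w * x)"
            by (rule someI[of "\<lambda>y. T (w * y) = T (w * x)" x]) simp
          then show ?thesis unfolding \<Phi>_def
            by (intro dep[OF w(2) red fdef]) simp
        qed
        have HC: "H_component k t f uu v = (\<lambda>x. trb k (uu * x ^ (2 ^ k + 1)) \<noteq> \<Phi> (T (w * x)))"
          by (rule ext) (simp add: H_component_def Phi)
        have "walsh n (H_component k t f uu v) a \<in> {0, 2 ^ k, - (2 ^ k)}" for a
          using subst_core[OF uuK False w(1), of \<Phi> a] unfolding HC by blast
        moreover have "n \<le> 2 * k" "k \<le> n" using nk by auto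
        ultimately show ?thesis unfolding plateaued_def by blast
      qed
    qed
  qed
qed

end
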